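(* Assume the Perturbed Composite Setting (see context). Let $\beta\ge\rho$, $\gamma:=\rho/\beta$, suppose $\varepsilon<\frac{\mu^2\gamma}{56\rho}$, and let $x_0\in\mathcal{X}$ with $\frac{14\varepsilon}{\mu}<\mathrm{dist}(x_0,\mathcal{X}^* )<\frac{\gamma\mu}{4\rho}$. Define the prox-linear iterates on the perturbed problem $$x_{k+1}=\operatorname{argmin}_{x\in\mathcal{X}}\Big\{h\big(F(x_k)+e+\nabla F(x_k)(x-x_k)\big)+\frac\beta2\|x-x_k\|^2\Big\}.$$ Then for every $k\ge0$ with $\mathrm{dist}(x_{k+1},\mathcal{X}^* )\ge14\varepsilon/\mu$, $$\mathrm{dist}(x_{k+1},\mathcal{X}^* )\le\frac{7\beta}{6\mu}\mathrm{dist}^2(x_k,\mathcal{X}^* ).$$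
   Context: Perturbed Composite Setting: $\mathbf{E},\mathbf{Y}$ are Euclidean spaces ($\|\cdot\|$ the Euclidean norm on $\mathbf{E}$), $\mathcal{X}\subset\mathbf{E}$ nonempty closed convex, $F\colon\mathbf{E}\to\mathbf{Y}$ continuously differentiable with Jacobian $\nabla F(x)$, $h\colon\mathbf{Y}\to\mathbb{R}$ convex and $\eta$-Lipschitz with respect to a norm $|||\cdot|||$ on $\mathbf{Y}$. Set $f=h\circ F$, $f_x(y)=h(F(x)+\nabla F(x)(y-x))$, and assume $\mathcal{X}^*:=\operatorname{argmin}_{\mathcal{X}}f\ne\emptyset$ and constants $\mu,\rho>0$ with $|f(y)-f_x(y)|\le\frac\rho2\|y-x\|^2$ for all $x,y\in\mathcal{X}$ and $f(x)-\min_{\mathcal{X}}f\ge\mu\,\mathrm{dist}(x,\mathcal{X}^* )$ for all $x\in\mathcal{X}$. Fix $e\in\mathbf{Y}$ and set $\tilde f(x)=h(F(x)+e)$, $\varepsilon:=\eta|||e|||$. $\mathrm{dist}$ is the Euclidean distance. *)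

theory Defs
  imports "HOL-Analysis.Analysis"
begin

definition is_norm :: "('y::real_vector \<Rightarrow> real) \<Rightarrow> bool" where
  "is_norm N \<longleftrightarrow>
     (\<forall>u. 0 \<le> N u) \<and> (\<forall>u. N u = 0 \<longleftrightarrow> u = 0) \<and>
     (\<forall>c u. N (c *\<^sub>R u) = \<bar>c\<bar> * N u) \<and> (\<forall>u v. N (u + v) \<le> N u + N v)"

end

theory Submission
  imports Defs
begin

theorem theorem9p7:
  fixes X :: "'e::euclidean_space set"
    and F :: "'e \<Rightarrow> 'y::euclidean_space"
    and F' :: "'e \<Rightarrow> ('e \<Rightarrow>\<^sub>L 'y)"
    and h :: "'y \<Rightarrow> real"
    and N :: "'y \<Rightarrow> real"
    and \<eta> \<mu> \<rho> \<beta> :: real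
    and e :: 'y
    and x :: "nat \<Rightarrow> 'e"
  defines "f \<equiv> (\<lambda>z. h (F z))"
    and "Xstar \<equiv> {z \<in> X. \<forall>y\<in>X. h (F z) \<le> h (F y)}"
    and "\<epsilon> \<equiv> \<eta> * N e"
    and "\<gamma> \<equiv> \<rho> / \<beta>"
  assumes X_ne: "X \<noteq> {}" and X_closed: "closed X" and X_convex: "convex X"
    and F_deriv: "\<And>z. (F has_derivative blinfun_apply (F' z)) (at z)"
    and F'_cont: "continuous_on UNIV F'"
    and h_convex: "convex_on UNIV h"
    and N_norm: "is_norm N"
    and eta_nonneg: "0 \<le> \<eta>"
    and h_lip: "\<And>u v. \<bar>h u - h v\<bar> \<le> \<eta> * N (u - v)"
    and Xstar_ne: "Xstar \<noteq> {}"
    and mu_pos: "0 < \<mu>" and rho_pos: "0 < \<rho>"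
    and model: "\<And>z y. z \<in> X \<Longrightarrow> y \<in> X \<Longrightarrow>
        \<bar>f y - h (F z + F' z (y - z))\<bar> \<le> \<rho> / 2 * (norm (y - z))\<^sup>2"
    and sharp: "\<And>z. z \<in> X \<Longrightarrow> f z - (INF y\<in>X. f y) \<ge> \<mu> * infdist z Xstar"
    and beta: "\<beta> \<ge> \<rho>"
    and eps_small: "\<epsilon> < \<mu>\<^sup>2 * \<gamma> / (56 * \<rho>)"
    and x0: "x 0 \<in> X"
    and x0_lo: "14 * \<epsilon> / \<mu> < infdist (x 0) Xstar"
    and x0_hi: "infdist (x 0) Xstar < \<gamma> * \<mu> / (4 * \<rho>)"
    and iter: "\<And>k. x (Suc k) \<in> X \<and>
        (\<forall>y\<in>X. h (F (x k) + e + F' (x k) (x (Suc k) - x k)) + \<beta> / 2 * (norm (x (Suc k) - x k))\<^sup>2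
               \<le> h (F (x k) + e + F' (x k) (y - x k)) + \<beta> / 2 * (norm (y - x k))\<^sup>2)"
  shows "\<forall>k. infdist (x (Suc k)) Xstar \<ge> 14 * \<epsilon> / \<mu> \<longrightarrow>
           infdist (x (Suc k)) Xstar \<le> 7 * \<beta> / (6 * \<mu>) * (infdist (x k) Xstar)\<^sup>2"
proof (intro allI impI)
  fix k
  assume lo: "infdist (x (Suc k)) Xstar \<ge> 14 * \<epsilon> / \<mu>"
  have hc: "continuous_on UNIV h" using convex_on_continuous[OF open_UNIV h_convex] .
  have Fc: "continuous_on UNIV F"
    using F_deriv has_derivative_continuous continuous_at_imp_continuous_on by blast
  have fc: "continuous_on UNIV f" unfolding f_def
    using continuous_on_compose2[OF hc Fc] by auto
  have XsEq: "Xstar = X \<inter> (\<Inter>y\<in>X. {z. f z \<le> f y})" unfolding Xstar_def f_def by auto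
  have "closed (\<Inter>y\<in>X. {z. f z \<le> f y})"
    using closed_Collect_le[OF fc continuous_on_const] by (intro closed_INT) auto
  hence clX: "closed Xstar" using XsEq X_closed by auto
  have xk: "x k \<in> X" using x0 iter by (cases k) auto
  obtain xb where xb: "xb \<in> Xstar" "infdist (x k) Xstar = dist (x k) xb"
    using infdist_attains_inf[OF clX Xstar_ne] by blast
  have xbX: "xb \<in> X" and xbmin: "\<And>y. y \<in> X \<Longrightarrow> f xb \<le> f y" using xb(1) unfolding Xstar_def f_def by auto
  have inf: "(INF y\<in>X. f y) = f xb"
    by (rule cInf_eq_minimum) (use xbX xbmin in auto)
  define d where "d = infdist (x k) Xstar"
  have dnorm: "norm (xb - x k) = d" using xb(2) unfolding d_def by (simp add: dist_norm norm_minus_commute)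
  define xp where "xp = x (Suc k)"
  have xpX: "xp \<in> X" using iter unfolding xp_def by blast
  have minst: "h (F (x k) + e + F' (x k) (xp - x k)) + \<beta> / 2 * (norm (xp - x k))\<^sup>2
               \<le> h (F (x k) + e + F' (x k) (xb - x k)) + \<beta> / 2 * (norm (xb - x k))\<^sup>2"
    using iter xbX unfolding xp_def by blast
  have pert: "\<bar>h (F (x k) + e + F' (x k) (y - x k)) - h (F (x k) + F' (x k) (y - x k))\<bar> \<le> \<epsilon>" for y
    using h_lip[of "F (x k) + e + F' (x k) (y - x k)" "F (x k) + F' (x k) (y - x k)"]
    unfolding \<epsilon>_def by simp
  have m1: "f xp \<le> h (F (x k) + F' (x k) (xp - x k)) + \<rho> / 2 * (norm (xp - x k))\<^sup>2"
    using model[OF xk xpX] by linarith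
  have m2: "h (F (x k) + F' (x k) (xb - x k)) \<le> f xb + \<rho> / 2 * (norm (xb - x k))\<^sup>2"
    using model[OF xk xbX] by linarith
  have rb: "\<rho> / 2 * (norm (xp - x k))\<^sup>2 \<le> \<beta> / 2 * (norm (xp - x k))\<^sup>2"
    using beta by (intro mult_right_mono) auto
  have rb2: "\<rho> / 2 * d\<^sup>2 \<le> \<beta> / 2 * d\<^sup>2"
    using beta by (intro mult_right_mono) auto
  have key: "f xp \<le> f xb + \<beta> * d\<^sup>2 + 2 * \<epsilon>"
    using m1 m2 rb rb2 minst pert[of xp] pert[of xb] dnorm by (simp add: abs_le_iff)
  have sh: "\<mu> * infdist xp Xstar \<le> \<beta> * d\<^sup>2 + 2 * \<epsilon>"
    using sharp[OF xpX] inf key by linarith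
  have "2 * \<epsilon> \<le> \<mu> * infdist xp Xstar / 7"
    using lo mu_pos unfolding xp_def by (simp add: field_simps)
  hence "6 * \<mu> * infdist xp Xstar \<le> 7 * \<beta> * d\<^sup>2" using sh by linarith
  thus "infdist (x (Suc k)) Xstar \<le> 7 * \<beta> / (6 * \<mu>) * (infdist (x k) Xstar)\<^sup>2"
    using mu_pos unfolding xp_def d_def by (simp add: field_simps)
qed

end
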